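(* Let $a\in[0,1)$ and $q\in(0,q_a]$, where $q_a:=\min\big(\log_2(2-a),\tfrac12\big)$. Then $-\Delta_a\ge W$ in the sense of quadratic forms, where $W=\mathrm{diag}(w_1,w_2,\dots)$ with \[ w_n=2-\Big(1-\frac1n\Big)^q-\Big(1+\frac1n\Big)^q-a\,\delta_{n,1},\qquad n\in\mathbb{N}. \] Moreover, each such weight $w$ is an optimal Hardy weight for $-\Delta_a$.
   Context: $\mathbb{N}=\{1,2,\dots\}$. For $a\in[0,1)$, $-\Delta_a:=2-J_a$ on $\ell^2(\mathbb{N})$, where $(J_a\psi)_1=a\psi_1+\psi_2$ and $(J_a\psi)_n=\psi_{n-1}+\psi_{n+1}$ for $n\ge2$; its quadratic form is $\langle u,-\Delta_a u\rangle=\sum_{n\ge1}|u_n-u_{n-1}|^2-a|u_1|^2$ with $u_0:=0$. A Hardy weight for $-\Delta_a$ is a sequence $\tilde w\ge0$ with $\sum_n\tilde w_n|u_n|^2\le\langle u,-\Delta_au\rangle$ for all $u$ (equivalently all finitely supported $u$); it is optimal if every Hardy weight $\tilde w$ for $-\Delta_a$ with $\tilde w\ge w$ pointwise equals $w$. *)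

theory Defs
  imports "HOL-Analysis.Analysis"
begin

text \<open>Sequences on N = {1,2,...} are modelled as functions nat => _, where the
value at index 0 is ignored (the convention u_0 := 0 is built into the form).\<close>

text \<open>Quadratic form of -Delta_a on finitely supported u, with u_0 := 0.
  For n > N all terms vanish, so the sum over {1..N+1} is the full series.\<close>
definition qform :: "real \<Rightarrow> nat \<Rightarrow> (nat \<Rightarrow> complex) \<Rightarrow> real" where
  "qform a N u =
     (\<Sum>n=1..Suc N. (cmod ((if n = 1 then u 1 else u n - u (n - 1))))^2) - a * (cmod (u 1))^2"

definition hardy_weight :: "real \<Rightarrow> (nat \<Rightarrow> real) \<Rightarrow> bool" where
  "hardy_weight a w \<longleftrightarrow>
     (\<forall>n\<ge>1. w n \<ge> 0) \<and>
     (\<forall>u N. (\<forall>n>N. u n = 0) \<longrightarrow>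
        (\<Sum>n=1..N. w n * (cmod (u n))^2) \<le> qform a N u)"

definition optimal_hardy_weight :: "real \<Rightarrow> (nat \<Rightarrow> real) \<Rightarrow> bool" where
  "optimal_hardy_weight a w \<longleftrightarrow>
     hardy_weight a w \<and>
     (\<forall>w'. hardy_weight a w' \<and> (\<forall>n\<ge>1. w' n \<ge> w n) \<longrightarrow> (\<forall>n\<ge>1. w' n = w n))"

definition q_a :: "real \<Rightarrow> real" where
  "q_a a = min (log 2 (2 - a)) (1/2)"

definition W_weight :: "real \<Rightarrow> real \<Rightarrow> nat \<Rightarrow> real" where
  "W_weight a q n = 2 - (1 - 1 / real n) powr q - (1 + 1 / real n) powr q
                     - (if n = 1 then a else 0)"

end

theory Submission imports Defs "HOL-Analysis.Harmonic_Numbers" begin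

lemma gsr_step:
  fixes a b X Y :: real
  assumes "a > 0" "b > 0"
  shows "(Y - X)^2 = (1 - b/a) * X^2 + (1 - a/b) * Y^2 + a*b*(Y/b - X/a)^2"
  using assms by (simp add: field_simps power2_eq_square)

lemma gsr:
  fixes g v :: "nat \<Rightarrow> real"
  assumes "\<And>n. n \<ge> 1 \<Longrightarrow> g n > 0" "g 0 = 0" "N \<ge> 1"
  shows "(\<Sum>n=1..N. (v n - (if n=1 then 0 else v (n-1)))^2) =
    (\<Sum>m=1..N. (2 - g (Suc m)/g m - g (m-1)/g m) * (v m)^2) - (1 - g (Suc N)/g N) * (v N)^2
    + (\<Sum>n=2..N. g (n-1) * g n * (v n/g n - v (n-1)/g (n-1))^2)"
  using assms(3)
proof (induction N rule: nat_induct_at_least)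
  case base
  have "g 1 > 0" using assms(1) by auto
  then show ?case using assms(2) by (simp add: field_simps)
next
  case (Suc N)
  have a: "g N > 0" "g (Suc N) > 0" using assms(1) Suc by auto
  have e: "(v (Suc N) - v N)^2 = (1 - g (Suc N)/g N) * (v N)^2 + (1 - g N/g (Suc N)) * (v (Suc N))^2
     + g N * g (Suc N) * (v (Suc N)/g (Suc N) - v N/g N)^2"
    by (rule gsr_step[OF a])
  show ?case using Suc.IH Suc.hyps e by (simp add: sum.cl_ivl_Suc algebra_simps)
qed

definition gq :: "real \<Rightarrow> nat \<Rightarrow> real" where "gq q n = real n powr q"

lemma gq_pos: "n \<ge> 1 \<Longrightarrow> gq q n > 0" by (simp add: gq_def)
lemma gq_0: "q > 0 \<Longrightarrow> gq q 0 = 0" by (simp add: gq_def)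

lemma coef:
  assumes "m \<ge> 1"
  shows "2 - gq q (Suc m)/gq q m - gq q (m-1)/gq q m - (if m=1 then a else 0) = W_weight a q m"
proof -
  have m: "real m > 0" using assms by simp
  have 1: "gq q (Suc m)/gq q m = (1 + 1/real m) powr q"
  proof -
    have "1 + 1/real m = real (Suc m) / real m" using m by (simp add: field_simps)
    then show ?thesis unfolding gq_def by (simp add: powr_divide)
  qed
  have 2: "gq q (m-1)/gq q m = (1 - 1/real m) powr q"
  proof -
    have "1 - 1/real m = real (m-1) / real m" using m assms by (simp add: field_simps of_nat_diff)
    then show ?thesis unfolding gq_def by (simp add: powr_divide)
  qed
  show ?thesis unfolding W_weight_def 1 2 by simp
qed

lemma main_id:
  assumes "q > 0" "v (Suc N) = 0"
  shows "(\<Sum>n=1..Suc N. (v n - (if n=1 then 0 else v (n-1)))^2) - a * (v 1)^2 =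
    (\<Sum>m=1..N. W_weight a q m * (v m)^2) 
    + (\<Sum>n=2..Suc N. gq q (n-1) * gq q n * (v n/gq q n - v (n-1)/gq q (n-1))^2)"
proof -
  have "(\<Sum>n=1..Suc N. (v n - (if n=1 then 0 else v (n-1)))^2) =
    (\<Sum>m=1..Suc N. (2 - gq q (Suc m)/gq q m - gq q (m-1)/gq q m) * (v m)^2) 
    + (\<Sum>n=2..Suc N. gq q (n-1) * gq q n * (v n/gq q n - v (n-1)/gq q (n-1))^2)"
    using gsr[of "gq q" "Suc N" v] gq_pos gq_0[OF assms(1)] assms(2) by simp
  moreover have "(\<Sum>m=1..Suc N. (2 - gq q (Suc m)/gq q m - gq q (m-1)/gq q m) * (v m)^2)
     = (\<Sum>m=1..Suc N. W_weight a q m * (v m)^2 + (if m = 1 then a * (v m)^2 else 0))"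
  proof (intro sum.cong refl)
    fix m assume "m \<in> {1..Suc N}"
    then have c: "W_weight a q m + (if m=1 then a else 0) = 2 - gq q (Suc m)/gq q m - gq q (m-1)/gq q m"
      using coef[of m q a] by simp
    have "(if m = 1 then a * (v m)^2 else 0) = (if m=1 then a else 0) * (v m)^2" by simp
    then show "(2 - gq q (Suc m)/gq q m - gq q (m-1)/gq q m) * (v m)^2 = W_weight a q m * (v m)^2 + (if m = 1 then a * (v m)^2 else 0)"
      using c by (simp only: distrib_right[symmetric])
  qed
  moreover have "(\<Sum>m=1..Suc N. W_weight a q m * (v m)^2 + (if m = 1 then a * (v m)^2 else 0))
     = (\<Sum>m=1..N. W_weight a q m * (v m)^2) + a * (v 1)^2"
    using assms(2) by (simp add: sum.distrib sum.cl_ivl_Suc)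
  ultimately show ?thesis by simp
qed

lemma bern:
  fixes t q :: real
  assumes "t > -1" "0 \<le> q" "q \<le> 1"
  shows "(1 + t) powr q \<le> 1 + q * t"
  using Youngs_inequality_0[of q "1 - q" "1 + t" 1] assms by (simp add: algebra_simps)

lemma W_nonneg:
  assumes "0 \<le> a" "a < 1" "0 < q" "q \<le> q_a a" "m \<ge> 1"
  shows "W_weight a q m \<ge> 0"
proof (cases "m = 1")
  case True
  have "q \<le> log 2 (2 - a)" using assms(4) by (simp add: q_a_def)
  then have "2 powr q \<le> 2 powr (log 2 (2 - a))" by (intro powr_mono) auto
  also have "\<dots> = 2 - a" using assms by simp
  finally show ?thesis using True assms by (simp add: W_weight_def)
next
  case False
  have q1: "q \<le> 1" using assms(4) by (simp add: q_a_def)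
  have m: "real m \<ge> 2" using False assms(5) by simp
  have "1/real m < 1" using m by simp
  then have "(1 + (- (1/real m))) powr q \<le> 1 + q * (- (1/real m))"
    using bern[of "- (1/real m)" q] assms q1 by simp
  moreover have "(1 + 1/real m) powr q \<le> 1 + q * (1/real m)"
  proof -
    have "-1 < 1/real m" using m by (smt (verit) divide_nonneg_nonneg of_nat_0_le_iff)
    from bern[OF this, of q] assms q1 show ?thesis by simp
  qed
  ultimately show ?thesis using False by (simp add: W_weight_def)
qed

lemma hardy_ineq:
  assumes "0 \<le> a" "a < 1" "0 < q" "q \<le> q_a a" "\<forall>n>N. u n = 0"
  shows "(\<Sum>n=1..N. W_weight a q n * (cmod (u n))^2) \<le> qform a N u"
proof -
  define v where "v n = cmod (u n)" for n
  have v0: "v (Suc N) = 0" using assms(5) by (simp add: v_def)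
  have "(\<Sum>n=1..Suc N. (v n - (if n=1 then 0 else v (n-1)))^2) \<le>
        (\<Sum>n=1..Suc N. (cmod ((if n = 1 then u 1 else u n - u (n - 1))))^2)"
  proof (intro sum_mono)
    fix n
    show "(v n - (if n=1 then 0 else v (n-1)))^2 \<le> (cmod ((if n = 1 then u 1 else u n - u (n - 1))))^2"
    proof (cases "n = 1")
      case True then show ?thesis by (simp add: v_def)
    next
      case False
      have "\<bar>v n - v (n-1)\<bar> \<le> cmod (u n - u (n-1))" unfolding v_def by (rule norm_triangle_ineq3)
      then have "\<bar>v n - v (n-1)\<bar>^2 \<le> (cmod (u n - u (n-1)))^2" by (intro power_mono) auto
      then show ?thesis using False by simp
    qed
  qed
  moreover have "0 \<le> (\<Sum>n=2..Suc N. gq q (n-1) * gq q n * (v n/gq q n - v (n-1)/gq q (n-1))^2)"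
    by (intro sum_nonneg) (simp add: gq_def)
  ultimately show ?thesis using main_id[of q v N a, OF assms(3) v0]
    unfolding qform_def v_def by simp
qed

lemma harm_diff:
  assumes "m \<le> K"
  shows "(\<Sum>n=1..K. if n \<le> m then 0 else 1/real n) = harm K - (harm m :: real)"
  using assms
proof (induction K rule: nat_induct_at_least)
  case base
  have "(\<Sum>n=1..m. if n \<le> m then 0 else 1/real n) = (0::real)" by (intro sum.neutral) auto
  then show ?case by simp
next
  case (Suc K)
  then show ?case by (simp add: sum.cl_ivl_Suc harm_Suc inverse_eq_divide)
qed

lemma gq_prod_le:
  assumes "0 < q" "q \<le> 1/2" "n \<ge> 1"
  shows "gq q (n-1) * gq q n \<le> real n"
proof -
  have "gq q (n-1) \<le> gq q n" unfolding gq_def by (intro powr_mono2) (use assms in auto)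
  then have "gq q (n-1) * gq q n \<le> gq q n * gq q n"
    by (intro mult_right_mono) (auto simp: gq_def)
  also have "\<dots> = real n powr (2*q)" unfolding gq_def by (simp add: powr_add[symmetric])
  also have "\<dots> \<le> real n powr 1" by (intro powr_mono) (use assms in auto)
  also have "\<dots> = real n" using assms by simp
  finally show ?thesis .
qed

lemma optimal:
  assumes "0 \<le> a" "a < 1" "0 < q" "q \<le> q_a a" "hardy_weight a w'"
    "\<forall>n\<ge>1. w' n \<ge> W_weight a q n" "m \<ge> 1"
  shows "w' m = W_weight a q m"
proof (rule ccontr)
  assume ne: "w' m \<noteq> W_weight a q m"
  define \<delta> where "\<delta> = w' m - W_weight a q m"
  have dpos: "\<delta> > 0" using ne assms(6,7) unfolding \<delta>_def by force
  have q12: "q \<le> 1/2" using assms(4) by (simp add: q_a_def)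
  obtain M where M: "m \<le> M" "harm (Suc M) - harm m > (1/\<delta> :: real)"
  proof -
    have "eventually (\<lambda>n. harm m + 1/\<delta> + 1 \<le> (harm n :: real)) sequentially"
      using harm_at_top unfolding filterlim_at_top by blast
    then obtain N0 where N0: "\<And>n. n \<ge> N0 \<Longrightarrow> harm m + 1/\<delta> + 1 \<le> (harm n :: real)"
      unfolding eventually_sequentially by blast
    define n where "n = max N0 (Suc m)"
    have "harm m + 1/\<delta> + 1 \<le> (harm n :: real)" using N0 n_def by simp
    moreover have "Suc (n - 1) = n" "m \<le> n - 1" using n_def by auto
    ultimately show ?thesis using that[of "n-1"] by simp
  qed
  define H :: real where "H = harm (Suc M) - harm m"
  have id0: "1/\<delta> > 0" using dpos by simp
  have Hpos: "H > 0" using M id0 unfolding H_def by linarith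
  have "\<delta> * (1/\<delta>) < \<delta> * H" using M dpos unfolding H_def by (intro mult_strict_left_mono) auto
  then have "1 < \<delta> * H" using dpos by simp
  then have Hd: "1/H < \<delta>" using Hpos by (simp add: divide_less_eq mult.commute)
  define \<phi> where "\<phi> n = (if n \<le> m then 1 else if n \<le> Suc M then (harm (Suc M) - harm n)/H else 0)" for n
  define v where "v n = gq q n * \<phi> n" for n
  define u where "u n = complex_of_real (v n)" for n
  have uz: "\<forall>n>M. u n = 0"
  proof (intro allI impI)
    fix n assume "n > M"
    then have "n = Suc M \<or> n > Suc M" by auto
    then show "u n = 0" using M \<open>n > M\<close> unfolding u_def v_def \<phi>_def by auto
  qed
  have v0: "v (Suc M) = 0" using uz unfolding u_def by auto
  have hw: "(\<Sum>n=1..M. w' n * (cmod (u n))^2) \<le> qform a M u"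
    using assms(5) uz unfolding hardy_weight_def by blast
  have qf: "qform a M u = (\<Sum>n=1..Suc M. (v n - (if n=1 then 0 else v (n-1)))^2) - a * (v 1)^2"
    unfolding qform_def
  proof -
    have "(\<Sum>n=1..Suc M. (cmod ((if n = 1 then u 1 else u n - u (n - 1))))^2)
       = (\<Sum>n=1..Suc M. (v n - (if n=1 then 0 else v (n-1)))^2)"
    proof (intro sum.cong refl)
      fix n
      have "(if n = 1 then u 1 else u n - u (n - 1)) = complex_of_real (v n - (if n=1 then 0 else v (n-1)))"
        unfolding u_def by auto
      then show "(cmod ((if n = 1 then u 1 else u n - u (n - 1))))^2 = (v n - (if n=1 then 0 else v (n-1)))^2"
        by (simp only: norm_of_real power2_abs)
    qed
    moreover have "(cmod (u 1))^2 = (v 1)^2" unfolding u_def by (simp only: norm_of_real power2_abs)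
    ultimately show "(\<Sum>n=1..Suc M. (cmod ((if n = 1 then u 1 else u n - u (n - 1))))^2) - a * (cmod (u 1))^2
      = (\<Sum>n=1..Suc M. (v n - (if n=1 then 0 else v (n-1)))^2) - a * (v 1)^2" by simp
  qed
  define R where "R = (\<Sum>n=2..Suc M. gq q (n-1) * gq q n * (v n/gq q n - v (n-1)/gq q (n-1))^2)"
  have id: "qform a M u = (\<Sum>m=1..M. W_weight a q m * (v m)^2) + R"
    using main_id[of q v M a, OF assms(3) v0] qf unfolding R_def by simp
  have cu: "(cmod (u n))^2 = (v n)^2" for n unfolding u_def by (simp only: norm_of_real power2_abs)
  have "(\<Sum>n=1..M. (w' n - W_weight a q n) * (v n)^2) \<le> R"
    using hw id unfolding cu by (simp add: sum_subtractf left_diff_distrib)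
  moreover have "(w' m - W_weight a q m) * (v m)^2 \<le> (\<Sum>n=1..M. (w' n - W_weight a q n) * (v n)^2)"
    by (rule member_le_sum) (use M assms(6,7) in auto)
  moreover have "1 \<le> (v m)^2"
  proof -
    have "v m = gq q m" unfolding v_def \<phi>_def by simp
    moreover have "1 \<le> gq q m" unfolding gq_def using assms(3,7) by (intro ge_one_powr_ge_zero) auto
    ultimately show ?thesis by simp
  qed
  ultimately have "\<delta> * 1 \<le> R" unfolding \<delta>_def[symmetric]
    using mult_left_mono[of 1 "(v m)^2" \<delta>] dpos by linarith
  then have dR: "\<delta> \<le> R" by simp
  have "R \<le> (\<Sum>n=2..Suc M. (if n \<le> m then 0 else 1/real n) / H^2)"
    unfolding R_def
  proof (intro sum_mono)
    fix n assume n: "n \<in> {2..Suc M}"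
    have g1: "gq q n > 0" "gq q (n-1) > 0" using n gq_pos by auto
    have vphi: "v n / gq q n - v (n-1)/gq q (n-1) = \<phi> n - \<phi> (n-1)"
      unfolding v_def using g1 by simp
    show "gq q (n-1) * gq q n * (v n/gq q n - v (n-1)/gq q (n-1))^2 \<le> (if n \<le> m then 0 else 1/real n) / H^2"
    proof (cases "n \<le> m")
      case True
      moreover have "n - 1 \<le> m" using True by simp
      ultimately show ?thesis unfolding vphi \<phi>_def by simp
    next
      case False
      have p1: "\<phi> (n-1) = (harm (Suc M) - harm (n-1))/H"
      proof (cases "n - 1 = m")
        case True
        then show ?thesis using Hpos unfolding \<phi>_def H_def by simp
      next
        case False
        then show ?thesis using \<open>\<not> n \<le> m\<close> n unfolding \<phi>_def by auto
      qed
      have p2: "\<phi> n = (harm (Suc M) - harm n)/H"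
        using False n unfolding \<phi>_def by auto
      have hn: "harm n = harm (n-1) + inverse (real n)"
        using harm_Suc[of "n-1"] n by simp
      have d: "\<phi> n - \<phi> (n-1) = - (1 / (real n * H))"
        unfolding p1 p2 hn using Hpos by (simp add: field_simps)
      have nn: "real n > 0" using n by simp
      have "gq q (n-1) * gq q n * (\<phi> n - \<phi> (n-1))^2 \<le> real n * (1 / (real n * H))^2"
        unfolding d power2_minus by (intro mult_right_mono gq_prod_le) (use assms(3) q12 n in auto)
      also have "\<dots> = 1 / real n / H^2" using nn Hpos by (simp add: field_simps power2_eq_square)
      finally show ?thesis unfolding vphi using False by simp
    qed
  qed
  also have "\<dots> \<le> (\<Sum>n=1..Suc M. (if n \<le> m then 0 else 1/real n) / H^2)"
    by (intro sum_mono2) auto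
  also have "\<dots> = (\<Sum>n=1..Suc M. (if n \<le> m then 0 else 1/real n)) / H^2"
    by (rule sum_divide_distrib[symmetric])
  also have "\<dots> = H / H^2" using harm_diff[of m "Suc M"] M unfolding H_def by simp
  also have "\<dots> = 1 / H" using Hpos by (simp add: power2_eq_square)
  finally show False using dR Hd by simp
qed

theorem theorem4p8:
  fixes a q :: real
  assumes "0 \<le> a" "a < 1" "0 < q" "q \<le> q_a a"
  shows "(\<forall>u N. (\<forall>n>N. u n = 0) \<longrightarrow>
            (\<Sum>n=1..N. W_weight a q n * (cmod (u n))^2) \<le> qform a N u)
         \<and> optimal_hardy_weight a (W_weight a q)"
proof -
  have H: "\<forall>u N. (\<forall>n>N. u n = 0) \<longrightarrow>
            (\<Sum>n=1..N. W_weight a q n * (cmod (u n))^2) \<le> qform a N u"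
    using hardy_ineq[OF assms] by blast
  have hw: "hardy_weight a (W_weight a q)"
    unfolding hardy_weight_def using H W_nonneg[OF assms] by blast
  show ?thesis unfolding optimal_hardy_weight_def
    using H hw optimal[OF assms] by blast
qed

end
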